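(* Let $r\le s$, $M$ the space of complex $r\times s$ matrices, and $\lambda$ a pre-partition of length at most $r$ with associated orbit $O_\lambda\subset M_\infty$. If $\lambda$ is a partition, then $O_\lambda$ is a cylinder of $M_\infty$. More generally, if $r-k$ is the number of infinite terms of $\lambda$, then $O_\lambda$ is a cylinder of $(D_k)_\infty$, where $D_k\subset M$ is the variety of matrices of rank at most $k$.
   Context: For a variety $X$, a constructible subset is a finite union of locally closed subsets, and a cylinder in the arc space $X_\infty$ is a set $\psi_n^{-1}(C)$ with $C\subset X_n$ constructible, where $\psi_n:X_\infty\to X_n$ is the truncation to the $n$-th jet scheme. The $\mathbb{C}$-points of $M_\infty$ are $r\times s$ matrices over $\mathbb{C}[[t]]$, acted on by $G_\infty$ for $G=GL_r\times GL_s$ via $(g,h)\cdot A=gAh^{-1}$. A pre-partition of length at most $r$ is $\lambda_1\ge\dots\ge\lambda_r\ge0$ in $\mathbb N\cup\{\infty\}$ ($\infty>n$); a partition if all terms finite. $\delta_\lambda$ is the $r\times s$ matrix with first $s-r$ columns zero and last $r$ columns $\mathrm{diag}(t^{\lambda_1},\dots,t^{\lambda_r})$ ($t^\infty=0$), and $O_\lambda=G_\infty\cdot\delta_\lambda$. $D_k$ is defined by the $(k+1)\times(k+1)$ minors. *)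

theory Defs
  imports "HOL-Computational_Algebra.Formal_Power_Series" "HOL-Library.Extended_Nat"
          "HOL-Combinatorics.Permutations"
begin

text \<open>An r x s matrix with entries in a ring is modelled as a function
  nat => nat => 'a which vanishes outside the index box i < r, j < s.\<close>

definition mats :: "nat \<Rightarrow> nat \<Rightarrow> (nat \<Rightarrow> nat \<Rightarrow> 'a::zero) set" where
  "mats r s = {A. \<forall>i j. (r \<le> i \<or> s \<le> j) \<longrightarrow> A i j = 0}"

text \<open>C-points of the arc space M_infinity: r x s matrices over C[[t]].\<close>
abbreviation arcs :: "nat \<Rightarrow> nat \<Rightarrow> (nat \<Rightarrow> nat \<Rightarrow> complex fps) set" where
  "arcs r s \<equiv> mats r s"

definition mat_mult :: "nat \<Rightarrow> (nat \<Rightarrow> nat \<Rightarrow> 'a::comm_ring_1) \<Rightarrow> (nat \<Rightarrow> nat \<Rightarrow> 'a) \<Rightarrow> nat \<Rightarrow> nat \<Rightarrow> 'a" where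
  "mat_mult m A B = (\<lambda>i j. \<Sum>l<m. A i l * B l j)"

definition mat_one :: "nat \<Rightarrow> nat \<Rightarrow> nat \<Rightarrow> 'a::comm_ring_1" where
  "mat_one n = (\<lambda>i j. if i = j \<and> i < n then 1 else 0)"

definition GL_arc :: "nat \<Rightarrow> (nat \<Rightarrow> nat \<Rightarrow> complex fps) set" where
  "GL_arc n = {g \<in> mats n n. \<exists>h \<in> mats n n. mat_mult n g h = mat_one n \<and> mat_mult n h g = mat_one n}"

definition mat_inv_arc :: "nat \<Rightarrow> (nat \<Rightarrow> nat \<Rightarrow> complex fps) \<Rightarrow> nat \<Rightarrow> nat \<Rightarrow> complex fps" where
  "mat_inv_arc n g = (SOME h. h \<in> mats n n \<and> mat_mult n g h = mat_one n \<and> mat_mult n h g = mat_one n)"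

definition act :: "nat \<Rightarrow> nat \<Rightarrow> (nat \<Rightarrow> nat \<Rightarrow> complex fps) \<Rightarrow> (nat \<Rightarrow> nat \<Rightarrow> complex fps)
     \<Rightarrow> (nat \<Rightarrow> nat \<Rightarrow> complex fps) \<Rightarrow> nat \<Rightarrow> nat \<Rightarrow> complex fps" where
  "act r s g h A = mat_mult s (mat_mult r g A) (mat_inv_arc s h)"

text \<open>Pre-partitions of length at most r: lam 0 >= ... >= lam (r-1) >= 0 in N u {infinity}
  (values at indices >= r are irrelevant).\<close>
definition pre_partition :: "nat \<Rightarrow> (nat \<Rightarrow> enat) \<Rightarrow> bool" where
  "pre_partition r lam \<longleftrightarrow> (\<forall>i j. i \<le> j \<longrightarrow> j < r \<longrightarrow> lam j \<le> lam i)"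

definition is_partition :: "nat \<Rightarrow> (nat \<Rightarrow> enat) \<Rightarrow> bool" where
  "is_partition r lam \<longleftrightarrow> pre_partition r lam \<and> (\<forall>i<r. lam i \<noteq> \<infinity>)"

definition t_pow :: "enat \<Rightarrow> complex fps" where
  "t_pow e = (case e of enat m \<Rightarrow> fps_X ^ m | \<infinity> \<Rightarrow> 0)"

definition delta :: "nat \<Rightarrow> nat \<Rightarrow> (nat \<Rightarrow> enat) \<Rightarrow> nat \<Rightarrow> nat \<Rightarrow> complex fps" where
  "delta r s lam = (\<lambda>i j. if i < r \<and> j = (s - r) + i then t_pow (lam i) else 0)"

definition orbit :: "nat \<Rightarrow> nat \<Rightarrow> (nat \<Rightarrow> enat) \<Rightarrow> (nat \<Rightarrow> nat \<Rightarrow> complex fps) set" where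
  "orbit r s lam = {act r s g h (delta r s lam) | g h. g \<in> GL_arc r \<and> h \<in> GL_arc s}"

definition minor :: "(nat \<Rightarrow> nat \<Rightarrow> 'a::comm_ring_1) \<Rightarrow> nat list \<Rightarrow> nat list \<Rightarrow> 'a" where
  "minor A is js = (\<Sum>p | p permutes {..<length is}.
      of_int (sign p) * (\<Prod>l<length is. A (is ! l) (js ! p l)))"

definition minor_indices :: "nat \<Rightarrow> nat \<Rightarrow> nat \<Rightarrow> (nat list \<times> nat list) set" where
  "minor_indices r s m = {(is, js). length is = m \<and> length js = m \<and>
      sorted_wrt (<) is \<and> sorted_wrt (<) js \<and> set is \<subseteq> {..<r} \<and> set js \<subseteq> {..<s}}"

definition Dk_arcs :: "nat \<Rightarrow> nat \<Rightarrow> nat \<Rightarrow> (nat \<Rightarrow> nat \<Rightarrow> complex fps) set" where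
  "Dk_arcs r s k = {A \<in> arcs r s. \<forall>(is, js) \<in> minor_indices r s (Suc k). minor A is js = 0}"

text \<open>C-points of M_n (n-jets): matrices over C[t]/(t^(n+1)), stored via coefficients
  x (i,j,d), d <= n; i.e. points of the affine space C^(r*s*(n+1)).\<close>
definition jets :: "nat \<Rightarrow> nat \<Rightarrow> nat \<Rightarrow> (nat \<times> nat \<times> nat \<Rightarrow> complex) set" where
  "jets r s n = {x. \<forall>i j d. (r \<le> i \<or> s \<le> j \<or> n < d) \<longrightarrow> x (i, j, d) = 0}"

definition trunc :: "nat \<Rightarrow> (nat \<Rightarrow> nat \<Rightarrow> complex fps) \<Rightarrow> nat \<times> nat \<times> nat \<Rightarrow> complex" where
  "trunc n A = (\<lambda>(i, j, d). if d \<le> n then fps_nth (A i j) d else 0)"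

definition jet_mat :: "(nat \<times> nat \<times> nat \<Rightarrow> complex) \<Rightarrow> nat \<Rightarrow> nat \<Rightarrow> complex fps" where
  "jet_mat x = (\<lambda>i j. Abs_fps (\<lambda>d. x (i, j, d)))"

definition Dk_jets :: "nat \<Rightarrow> nat \<Rightarrow> nat \<Rightarrow> nat \<Rightarrow> (nat \<times> nat \<times> nat \<Rightarrow> complex) set" where
  "Dk_jets r s k n = {x \<in> jets r s n. \<forall>(is, js) \<in> minor_indices r s (Suc k).
       \<forall>d\<le>n. fps_nth (minor (jet_mat x) is js) d = 0}"

inductive_set poly_funs :: "(('v \<Rightarrow> complex) \<Rightarrow> complex) set" where
  const: "(\<lambda>_. c) \<in> poly_funs"
| var: "(\<lambda>x. x v) \<in> poly_funs"
| add: "f \<in> poly_funs \<Longrightarrow> g \<in> poly_funs \<Longrightarrow> (\<lambda>x. f x + g x) \<in> poly_funs"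
| mult: "f \<in> poly_funs \<Longrightarrow> g \<in> poly_funs \<Longrightarrow> (\<lambda>x. f x * g x) \<in> poly_funs"

definition zariski_closed_in :: "('v \<Rightarrow> complex) set \<Rightarrow> ('v \<Rightarrow> complex) set \<Rightarrow> bool" where
  "zariski_closed_in X Z \<longleftrightarrow> (\<exists>F \<subseteq> poly_funs. Z = {x \<in> X. \<forall>f\<in>F. f x = 0})"

definition zariski_open_in :: "('v \<Rightarrow> complex) set \<Rightarrow> ('v \<Rightarrow> complex) set \<Rightarrow> bool" where
  "zariski_open_in X U \<longleftrightarrow> zariski_closed_in X (X - U)"

definition locally_closed_in :: "('v \<Rightarrow> complex) set \<Rightarrow> ('v \<Rightarrow> complex) set \<Rightarrow> bool" where
  "locally_closed_in X L \<longleftrightarrow> (\<exists>U Z. zariski_open_in X U \<and> U \<subseteq> X \<and> zariski_closed_in X Z \<and> L = U \<inter> Z)"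

definition constructible_in :: "('v \<Rightarrow> complex) set \<Rightarrow> ('v \<Rightarrow> complex) set \<Rightarrow> bool" where
  "constructible_in X C \<longleftrightarrow> (\<exists>\<L>. finite \<L> \<and> (\<forall>L\<in>\<L>. locally_closed_in X L) \<and> C = \<Union>\<L>)"

definition cylinder_M :: "nat \<Rightarrow> nat \<Rightarrow> (nat \<Rightarrow> nat \<Rightarrow> complex fps) set \<Rightarrow> bool" where
  "cylinder_M r s S \<longleftrightarrow> (\<exists>n C. constructible_in (jets r s n) C \<and>
      S = {A \<in> arcs r s. trunc n A \<in> C})"

text \<open>Cylinders of (D_k)_infinity: psi_n^{-1}(C) \<inter> (D_k)_infinity, with C a constructible
  subset of (D_k)_n (constructible in the closed subset (D_k)_n of M_n).\<close>
definition cylinder_Dk :: "nat \<Rightarrow> nat \<Rightarrow> nat \<Rightarrow> (nat \<Rightarrow> nat \<Rightarrow> complex fps) set \<Rightarrow> bool" where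
  "cylinder_Dk r s k S \<longleftrightarrow> (\<exists>n C. constructible_in (jets r s n) C \<and> C \<subseteq> Dk_jets r s k n \<and>
      S = {A \<in> Dk_arcs r s k. trunc n A \<in> C})"

end

theory Submission
  imports Defs "Jordan_Normal_Form.Determinant"
begin

type_synonym amat = "nat \<Rightarrow> nat \<Rightarrow> complex fps"

lemma mat_mult_assoc:
  "mat_mult n (mat_mult m A B) C = mat_mult m A (mat_mult n B C)"
  unfolding mat_mult_def
  by (intro ext) (simp add: sum_distrib_left sum_distrib_right mult.assoc sum.swap[of _ "{..<n}"])

lemma mat_mult_mats:
  assumes "A \<in> mats r m" "B \<in> mats m s" shows "mat_mult m A B \<in> mats r s"
  using assms unfolding mats_def mat_mult_def by auto

lemma mat_one_mats: "mat_one n \<in> mats n n"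
  unfolding mats_def mat_one_def by auto

lemma sum_delta_l: "(\<Sum>l<(n::nat). if i = l then f l else 0) = (if i < n then f i else (0::'a::comm_monoid_add))"
  by (cases "i < n") (auto simp: sum.delta sum.delta')

lemma sum_delta_r: "(\<Sum>l<(n::nat). if l = j then f l else 0) = (if j < n then f j else (0::'a::comm_monoid_add))"
  by (cases "j < n") (auto simp: sum.delta sum.delta')

lemma mat_one_left: assumes "A \<in> mats n s" shows "mat_mult n (mat_one n) A = A"
proof (intro ext)
  fix i j
  have "mat_mult n (mat_one n) A i j = (\<Sum>l<n. if i = l then A l j else 0)"
    unfolding mat_mult_def mat_one_def by (intro sum.cong) auto
  then show "mat_mult n (mat_one n) A i j = A i j" using assms unfolding mats_def by (simp add: sum_delta_l)
qed

lemma mat_one_right: assumes "A \<in> mats r n" shows "mat_mult n A (mat_one n) = A"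
proof (intro ext)
  fix i j
  have "mat_mult n A (mat_one n) i j = (\<Sum>l<n. if l = j then A i l else 0)"
    unfolding mat_mult_def mat_one_def by (intro sum.cong) auto
  then show "mat_mult n A (mat_one n) i j = A i j" using assms unfolding mats_def by (simp add: sum_delta_r)
qed

lemma GL_arc_mult: assumes "g \<in> GL_arc n" "h \<in> GL_arc n" shows "mat_mult n g h \<in> GL_arc n"
proof -
  from assms obtain g' h' where g': "g' \<in> mats n n" "mat_mult n g g' = mat_one n" "mat_mult n g' g = mat_one n"
    and h': "h' \<in> mats n n" "mat_mult n h h' = mat_one n" "mat_mult n h' h = mat_one n"
    and gh: "g \<in> mats n n" "h \<in> mats n n" unfolding GL_arc_def by auto
  have "mat_mult n (mat_mult n g h) (mat_mult n h' g') = mat_mult n g (mat_mult n (mat_mult n h h') g')"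
    by (simp add: mat_mult_assoc)
  also have "\<dots> = mat_one n" using h'(2) mat_one_left[OF g'(1)] g'(2) by simp
  finally have 1: "mat_mult n (mat_mult n g h) (mat_mult n h' g') = mat_one n" .
  have "mat_mult n (mat_mult n h' g') (mat_mult n g h) = mat_mult n h' (mat_mult n (mat_mult n g' g) h)"
    by (simp add: mat_mult_assoc)
  also have "\<dots> = mat_one n" using g'(3) mat_one_left[OF gh(2)] h'(3) by simp
  finally have 2: "mat_mult n (mat_mult n h' g') (mat_mult n g h) = mat_one n" .
  show ?thesis using 1 2 unfolding GL_arc_def using mat_mult_mats g' h' gh by blast
qed

lemma GL_arc_inv:
  assumes "g \<in> GL_arc n"
  shows "mat_inv_arc n g \<in> mats n n" "mat_mult n g (mat_inv_arc n g) = mat_one n"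
    "mat_mult n (mat_inv_arc n g) g = mat_one n"
proof -
  have "\<exists>h. h \<in> mats n n \<and> mat_mult n g h = mat_one n \<and> mat_mult n h g = mat_one n"
    using assms unfolding GL_arc_def by auto
  from someI_ex[OF this] show "mat_inv_arc n g \<in> mats n n" "mat_mult n g (mat_inv_arc n g) = mat_one n"
    "mat_mult n (mat_inv_arc n g) g = mat_one n" unfolding mat_inv_arc_def by auto
qed

lemma GL_arc_inv_GL: assumes "g \<in> GL_arc n" shows "mat_inv_arc n g \<in> GL_arc n"
  using GL_arc_inv[OF assms] assms unfolding GL_arc_def by auto

lemma GL_arc_inv_unique:
  assumes "g \<in> GL_arc n" "h \<in> mats n n" "mat_mult n g h = mat_one n"
  shows "mat_inv_arc n g = h"
proof -
  let ?i = "mat_inv_arc n g"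
  have "?i = mat_mult n ?i (mat_mult n g h)" using assms mat_one_right[OF GL_arc_inv(1)[OF assms(1)]] by simp
  also have "\<dots> = mat_mult n (mat_mult n ?i g) h" by (simp add: mat_mult_assoc)
  also have "\<dots> = h" using GL_arc_inv(3)[OF assms(1)] mat_one_left[OF assms(2)] by simp
  finally show ?thesis .
qed

lemma GL_arc_mats: "g \<in> GL_arc n \<Longrightarrow> g \<in> mats n n" unfolding GL_arc_def by auto

lemma delta_mats: "delta r s lam \<in> mats r s" if "r \<le> s"
  using that unfolding delta_def mats_def by auto

lemma orbit_alt: assumes "r \<le> s"
  shows "orbit r s lam = {mat_mult s (mat_mult r g (delta r s lam)) k | g k. g \<in> GL_arc r \<and> k \<in> GL_arc s}"
proof safe
  fix x assume "x \<in> orbit r s lam"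
  then obtain g h where "g \<in> GL_arc r" "h \<in> GL_arc s" "x = act r s g h (delta r s lam)"
    unfolding orbit_def by auto
  then show "\<exists>g k. x = mat_mult s (mat_mult r g (delta r s lam)) k \<and> g \<in> GL_arc r \<and> k \<in> GL_arc s"
    unfolding act_def using GL_arc_inv_GL by blast
next
  fix g k assume g: "g \<in> GL_arc r" and k: "k \<in> GL_arc s"
  let ?h = "mat_inv_arc s k"
  have h: "?h \<in> GL_arc s" using GL_arc_inv_GL[OF k] .
  have "mat_inv_arc s ?h = k"
    by (rule GL_arc_inv_unique[OF h GL_arc_mats[OF k]]) (use GL_arc_inv[OF k] in auto)
  then show "mat_mult s (mat_mult r g (delta r s lam)) k \<in> orbit r s lam"
    unfolding orbit_def act_def using g h by force
qed


definition inJ :: "enat \<Rightarrow> complex fps \<Rightarrow> bool" where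
  "inJ e f \<longleftrightarrow> (\<forall>d. enat d < e \<longrightarrow> fps_nth f d = 0)"

lemma inJ_0[simp]: "inJ e 0" unfolding inJ_def by simp

lemma inJ_add: "inJ e f \<Longrightarrow> inJ e g \<Longrightarrow> inJ e (f + g)" unfolding inJ_def by simp

lemma inJ_mult_left: assumes "inJ e f" shows "inJ e (g * f)"
  unfolding inJ_def
proof (intro allI impI)
  fix d assume d: "enat d < e"
  have "\<And>i. i \<in> {0..d} \<Longrightarrow> fps_nth f (d - i) = 0"
    using assms d unfolding inJ_def by (meson diff_le_self enat_ord_simps(1) le_less_trans)
  then show "fps_nth (g * f) d = 0" by (simp add: fps_mult_nth)
qed

lemma inJ_mult_right: assumes "inJ e f" shows "inJ e (f * g)"
  using inJ_mult_left[OF assms, of g] by (simp add: mult.commute)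

lemma inJ_sum: "(\<And>x. x \<in> S \<Longrightarrow> inJ e (F x)) \<Longrightarrow> inJ e (sum F S)"
  by (induction S rule: infinite_finite_induct) (auto intro: inJ_add)

lemma inJ_mono: "e' \<le> e \<Longrightarrow> inJ e f \<Longrightarrow> inJ e' f"
  unfolding inJ_def using order.strict_trans2 by blast

lemma inJ_infty: "inJ \<infinity> f \<longleftrightarrow> f = 0"
  unfolding inJ_def by (auto simp: fps_eq_iff)

lemma inJ_tpow: "inJ e (t_pow a) \<longleftrightarrow> e \<le> a"
proof (cases a)
  case (enat m)
  then show ?thesis unfolding inJ_def t_pow_def
    by (auto simp: fps_X_power_nth)
next
  case infinity
  then show ?thesis unfolding inJ_def t_pow_def by simp
qed

lemma t_pow_add: "t_pow (a + b) = t_pow a * t_pow b"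
  unfolding t_pow_def by (cases a; cases b) (auto simp: power_add)

lemma t_pow_sum: "t_pow (\<Sum>i\<in>S. f i) = (\<Prod>i\<in>S. t_pow (f i))"
proof (induction S rule: infinite_finite_induct)
  case (insert x F)
  then show ?case by (simp add: t_pow_add)
qed (auto simp: t_pow_def zero_enat_def)

definition V :: "nat \<Rightarrow> nat \<Rightarrow> (nat \<Rightarrow> nat \<Rightarrow> complex fps) \<Rightarrow> nat \<Rightarrow> enat \<Rightarrow> bool" where
  "V r s A m e \<longleftrightarrow> (\<forall>is js. length is = m \<longrightarrow> length js = m \<longrightarrow> set is \<subseteq> {..<r} \<longrightarrow> set js \<subseteq> {..<s}
      \<longrightarrow> inJ e (minor A is js))"

lemma minor_map: "minor A (map f [0..<m]) js =
   (\<Sum>p | p permutes {..<m}. of_int (sign p) * (\<Prod>l<m. A (f l) (js ! p l)))"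
  unfolding minor_def by (intro sum.cong refl arg_cong2[where f="(*)"] prod.cong) auto

lemma minor_mult_expand:
  assumes "length is = m"
  shows "minor (mat_mult r g A) is js =
    (\<Sum>f\<in>Pi\<^sub>E {..<m} (\<lambda>_. {..<r}). (\<Prod>l<m. g (is ! l) (f l)) * minor A (map f [0..<m]) js)"
proof -
  have "minor (mat_mult r g A) is js =
     (\<Sum>p | p permutes {..<m}. of_int (sign p) * (\<Prod>l<m. \<Sum>q<r. g (is ! l) q * A q (js ! p l)))"
    unfolding minor_def mat_mult_def assms ..
  also have "\<dots> = (\<Sum>p | p permutes {..<m}. of_int (sign p) *
      (\<Sum>f\<in>Pi\<^sub>E {..<m} (\<lambda>_. {..<r}). \<Prod>l<m. g (is ! l) (f l) * A (f l) (js ! p l)))"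
    by (subst prod_sum_PiE) auto
  also have "\<dots> = (\<Sum>p | p permutes {..<m}. \<Sum>f\<in>Pi\<^sub>E {..<m} (\<lambda>_. {..<r}).
      (\<Prod>l<m. g (is ! l) (f l)) * (of_int (sign p) * (\<Prod>l<m. A (f l) (js ! p l))))"
    by (simp add: sum_distrib_left prod.distrib mult_ac)
  also have "\<dots> = (\<Sum>f\<in>Pi\<^sub>E {..<m} (\<lambda>_. {..<r}). (\<Prod>l<m. g (is ! l) (f l)) *
      (\<Sum>p | p permutes {..<m}. of_int (sign p) * (\<Prod>l<m. A (f l) (js ! p l))))"
    by (subst sum.swap) (simp add: sum_distrib_left)
  also have "\<dots> = (\<Sum>f\<in>Pi\<^sub>E {..<m} (\<lambda>_. {..<r}). (\<Prod>l<m. g (is ! l) (f l)) * minor A (map f [0..<m]) js)"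
    by (simp add: minor_map)
  finally show ?thesis .
qed

lemma V_mult_left: assumes "V r s A m e" shows "V r' s (mat_mult r g A) m e"
  unfolding V_def
proof (intro allI impI)
  fix "is" js assume h: "length is = m" "length js = m" "set is \<subseteq> {..<r'}" "set js \<subseteq> {..<s}"
  show "inJ e (minor (mat_mult r g A) is js)"
    unfolding minor_mult_expand[OF h(1)]
  proof (intro inJ_sum inJ_mult_left)
    fix f assume f: "f \<in> Pi\<^sub>E {..<m} (\<lambda>_. {..<r})"
    have "set (map f [0..<m]) \<subseteq> {..<r}" using f by (auto simp: PiE_def Pi_def)
    then show "inJ e (minor A (map f [0..<m]) js)" using assms h unfolding V_def by auto
  qed
qed

definition tr :: "(nat \<Rightarrow> nat \<Rightarrow> 'a) \<Rightarrow> nat \<Rightarrow> nat \<Rightarrow> 'a" where "tr A = (\<lambda>i j. A j i)"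

lemma tr_tr[simp]: "tr (tr A) = A" unfolding tr_def by simp

lemma tr_mult: "tr (mat_mult n A B) = mat_mult n (tr B) (tr A)"
  unfolding tr_def mat_mult_def by (simp add: mult.commute)

lemma minor_det: assumes "length js = length is"
  shows "minor A is js = det (mat (length is) (length is) (\<lambda>(i,j). A (is ! i) (js ! j)))"
proof -
  have "det (mat (length is) (length is) (\<lambda>(i,j). A (is ! i) (js ! j))) =
    (\<Sum>p | p permutes {..<length is}. of_int (sign p) * (\<Prod>l<length is. mat (length is) (length is) (\<lambda>(i,j). A (is ! i) (js ! j)) $$ (l, p l)))"
    unfolding det_def by (simp add: atLeast0LessThan)
  also have "\<dots> = minor A is js" unfolding minor_def
  proof (intro sum.cong refl arg_cong2[where f="(*)"] prod.cong)
    fix p l assume "p \<in> {p. p permutes {..<length is}}" "l \<in> {..<length is}"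
    then have "p l < length is" using permutes_in_image by fastforce
    then show "mat (length is) (length is) (\<lambda>(i, j). A (is ! i) (js ! j)) $$ (l, p l) = A (is ! l) (js ! p l)"
      using \<open>l \<in> _\<close> by simp
  qed
  finally show ?thesis ..
qed

lemma minor_tr: assumes "length js = length is"
  shows "minor A is js = minor (tr A) js is"
proof -
  let ?M = "mat (length is) (length is) (\<lambda>(i,j). A (is ! i) (js ! j))"
  have "transpose_mat ?M = mat (length js) (length js) (\<lambda>(i,j). tr A (js ! i) (is ! j))"
    using assms by (intro eq_matI) (auto simp: tr_def)
  then show ?thesis using det_transpose[of ?M "length is"] assms
    by (simp add: minor_det[OF assms] minor_det[OF assms[symmetric]])
qed

lemma V_tr: "V r s A m e = V s r (tr A) m e"
  unfolding V_def by (metis minor_tr)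

lemma V_mult_right: assumes "V r s A m e" shows "V r s' (mat_mult s A h) m e"
proof -
  have "V s r (tr A) m e" using assms V_tr by auto
  then have "V s' r (mat_mult s (tr h) (tr A)) m e" by (rule V_mult_left)
  then show ?thesis by (simp add: V_tr[of r s'] tr_mult)
qed

lemma V_invariant:
  assumes A: "A \<in> mats r s" and g: "g \<in> GL_arc r" and k: "k \<in> GL_arc s"
  shows "V r s (mat_mult s (mat_mult r g A) k) m e \<longleftrightarrow> V r s A m e"
proof
  assume "V r s A m e" then show "V r s (mat_mult s (mat_mult r g A) k) m e"
    by (intro V_mult_right V_mult_left)
next
  assume h: "V r s (mat_mult s (mat_mult r g A) k) m e"
  let ?gi = "mat_inv_arc r g" and ?ki = "mat_inv_arc s k"
  have "mat_mult s (mat_mult r ?gi (mat_mult s (mat_mult r g A) k)) ?ki = A"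
  proof -
    have "mat_mult s (mat_mult r ?gi (mat_mult s (mat_mult r g A) k)) ?ki
       = mat_mult s (mat_mult r (mat_mult r ?gi g) A) (mat_mult s k ?ki)"
      by (simp add: mat_mult_assoc)
    also have "\<dots> = A" using GL_arc_inv[OF g] GL_arc_inv[OF k] A
      by (simp add: mat_one_left mat_one_right)
    finally show ?thesis .
  qed
  moreover have "V r s (mat_mult s (mat_mult r ?gi (mat_mult s (mat_mult r g A) k)) ?ki) m e"
    by (rule V_mult_right, rule V_mult_left, rule h)
  ultimately show "V r s A m e" by simp
qed

lemma minor_dup: assumes "a < length is" "b < length is" "a \<noteq> b" "is ! a = is ! b" "length js = length is"
  shows "minor A is js = 0"
proof -
  let ?n = "length is"
  let ?M = "mat ?n ?n (\<lambda>(i,j). A (is ! i) (js ! j))"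
  have "row ?M a = row ?M b" using assms by (intro eq_vecI) auto
  then have "det ?M = 0" by (intro det_identical_rows[of _ ?n a b]) (use assms in auto)
  then show ?thesis using minor_det[OF assms(5), of A] by simp
qed

lemma minor_perm_rows: assumes p: "p permutes {..<length is}" and "length js = length is"
  shows "minor A (permute_list p is) js = of_int (sign p) * minor A is js"
proof -
  let ?n = "length is"
  let ?M = "mat ?n ?n (\<lambda>(i,j). A (is ! i) (js ! j))"
  have p': "p permutes {0..<?n}" using p by (simp add: atLeast0LessThan)
  have pi: "\<And>i. i < ?n \<Longrightarrow> p i < ?n" using permutes_in_image[OF p] by simp
  have "mat ?n ?n (\<lambda>(i,j). ?M $$ (p i, j)) = mat ?n ?n (\<lambda>(i,j). A (permute_list p is ! i) (js ! j))"
    using pi by (intro eq_matI) (auto simp: permute_list_nth[OF p])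
  then show ?thesis using det_permute_rows[OF _ p', of ?M]
    by (simp add: minor_det[OF assms(2)] minor_det assms(2))
qed

lemma minor_zero_all:
  assumes h: "\<forall>(is, js) \<in> minor_indices r s m. minor A is js = 0"
    and l: "length is = m" "length js = m" "set is \<subseteq> {..<r}" "set js \<subseteq> {..<s}"
  shows "minor A is js = 0"
proof (cases "distinct is \<and> distinct js")
  case False
  then consider "\<not> distinct is" | "\<not> distinct js" by auto
  then show ?thesis
  proof cases
    case 1
    then obtain a b where "a < length is" "b < length is" "a \<noteq> b" "is ! a = is ! b"
      by (auto simp: distinct_conv_nth)
    then show ?thesis using minor_dup l by auto
  next
    case 2
    then obtain a b where "a < length js" "b < length js" "a \<noteq> b" "js ! a = js ! b"
      by (auto simp: distinct_conv_nth)
    then show ?thesis using minor_dup[of a js b "is" "tr A"] l minor_tr[of js "is" A] by auto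
  qed
next
  case True
  let ?i = "sort is" and ?j = "sort js"
  have si: "sorted_wrt (<) ?i" "sorted_wrt (<) ?j" using True by (auto simp: strict_sorted_iff)
  have mi: "(?i, ?j) \<in> minor_indices r s m" using si l unfolding minor_indices_def by auto
  obtain p where p: "p permutes {..<length ?i}" "permute_list p ?i = is"
    by (rule mset_eq_permutation[of "is" ?i]) simp
  obtain q where q: "q permutes {..<length ?j}" "permute_list q ?j = js"
    by (rule mset_eq_permutation[of js ?j]) simp
  have "minor A ?i ?j = 0" using h mi by auto
  then have "minor (tr A) ?j ?i = 0" using minor_tr[of ?j ?i A] l by simp
  then have "minor (tr A) js ?i = 0" using minor_perm_rows[OF q(1), of ?i "tr A"] q(2) l by simp
  then have "minor A ?i js = 0" using minor_tr[of js ?i A] l by simp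
  then show ?thesis using minor_perm_rows[OF p(1), of js A] p(2) l by simp
qed


definition esum :: "(nat \<Rightarrow> enat) \<Rightarrow> nat \<Rightarrow> nat \<Rightarrow> enat" where
  "esum lam r m = (\<Sum>i\<in>{r-m..<r}. lam i)"

lemma sum_bound:
  assumes "S \<subseteq> {..<r}" "card S = m" "pre_partition r lam"
  shows "esum lam r m \<le> (\<Sum>i\<in>S. lam i)"
  using assms(1,2)
proof (induction m arbitrary: S)
  case 0
  then have "S = {}" using finite_subset[OF 0(1)] by auto
  then show ?case by (simp add: esum_def)
next
  case (Suc m)
  have fin: "finite S" using finite_subset[OF Suc(2)] by auto
  then have ne: "S \<noteq> {}" using Suc by auto
  define x where "x = Min S"
  have xS: "x \<in> S" using Min_in[OF fin ne] x_def by simp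
  have Sx: "S \<subseteq> {x..<r}" using Suc(2) Min_le[OF fin] x_def by auto
  have "Suc m \<le> r - x" using card_mono[OF _ Sx] Suc(3) by simp
  then have xle: "x \<le> r - Suc m" and mr: "Suc m \<le> r" by auto
  have IH: "esum lam r m \<le> (\<Sum>i\<in>S - {x}. lam i)"
    using Suc(1)[of "S - {x}"] Suc(2,3) xS fin by auto
  have "lam (r - Suc m) \<le> lam x" using assms(3) xle mr unfolding pre_partition_def by auto
  moreover have "esum lam r (Suc m) = lam (r - Suc m) + esum lam r m"
  proof -
    have "{r - Suc m..<r} = insert (r - Suc m) {r - m..<r}" using mr by auto
    then show ?thesis unfolding esum_def using mr by simp
  qed
  moreover have "(\<Sum>i\<in>S. lam i) = lam x + (\<Sum>i\<in>S - {x}. lam i)"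
    using sum.remove[OF fin xS] .
  ultimately show ?case using IH add_mono by metis
qed

lemma delta_minor_J:
  assumes rs: "r \<le> s" and pp: "pre_partition r lam"
    and l: "length is = m" "length js = m" "set is \<subseteq> {..<r}"
  shows "inJ (esum lam r m) (minor (delta r s lam) is js)"
proof (cases "distinct is")
  case False
  then obtain a b where "a < length is" "b < length is" "a \<noteq> b" "is ! a = is ! b"
    by (auto simp: distinct_conv_nth)
  then show ?thesis using minor_dup[of a "is" b js "delta r s lam"] l by simp
next
  case True
  have cs: "card (set is) = m" using True l distinct_card by blast
  have sb: "esum lam r m \<le> (\<Sum>i\<in>set is. lam i)" by (rule sum_bound[OF l(3) cs pp])
  have sl: "(\<Sum>i\<in>set is. lam i) = (\<Sum>l<m. lam (is ! l))"
    using True l by (simp add: sum.distinct_set_conv_list sum_list_sum_nth atLeast0LessThan)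
  show ?thesis unfolding minor_def l(1)
  proof (intro inJ_sum inJ_mult_left)
    fix p assume p: "p \<in> {p. p permutes {..<m}}"
    show "inJ (esum lam r m) (\<Prod>l<m. delta r s lam (is ! l) (js ! p l))"
    proof (cases "\<forall>l<m. delta r s lam (is ! l) (js ! p l) = t_pow (lam (is ! l))")
      case True
      then have "(\<Prod>l<m. delta r s lam (is ! l) (js ! p l)) = (\<Prod>l<m. t_pow (lam (is ! l)))"
        by (intro prod.cong) auto
      also have "\<dots> = t_pow (\<Sum>i\<in>set is. lam i)" unfolding sl t_pow_sum ..
      finally show ?thesis using sb inJ_tpow by simp
    next
      case False
      then obtain l where "l < m" "delta r s lam (is ! l) (js ! p l) \<noteq> t_pow (lam (is ! l))" by auto
      then have "delta r s lam (is ! l) (js ! p l) = 0" unfolding delta_def by (auto split: if_splits)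
      then have z: "(\<Prod>l<m. delta r s lam (is ! l) (js ! p l)) = 0"
        using \<open>l < m\<close> by (intro prod_zero) auto
      show ?thesis by (simp only: z inJ_0)
    qed
  qed
qed

lemma delta_minor_prefix:
  assumes rs: "r \<le> s" and mr: "m \<le> r"
  shows "minor (delta r s lam) [r-m..<r] [s-m..<s] = t_pow (esum lam r m)"
proof -
  let ?is = "[r-m..<r]" and ?js = "[s-m..<s]"
  let ?f = "\<lambda>p. of_int (sign p) * (\<Prod>l<m. delta r s lam (?is ! l) (?js ! p l))"
  have len: "length ?is = m" using mr by simp
  have ent: "\<And>l. l < m \<Longrightarrow> delta r s lam (?is ! l) (?js ! q l) =
      (if q l = l then t_pow (lam (r - m + l)) else 0)" if "q permutes {..<m}" for q
  proof -
    fix l assume lm: "l < m"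
    have "q l < m" using permutes_in_image[OF that] lm by simp
    then show "delta r s lam (?is ! l) (?js ! q l) = (if q l = l then t_pow (lam (r - m + l)) else 0)"
      using lm mr rs unfolding delta_def by auto
  qed
  have "minor (delta r s lam) ?is ?js = (\<Sum>p | p permutes {..<m}. if p = id then ?f id else 0)"
    unfolding minor_def len
  proof (intro sum.cong refl)
    fix p assume p: "p \<in> {p. p permutes {..<m}}"
    show "?f p = (if p = id then ?f id else 0)"
    proof (cases "p = id")
      case False
      then obtain l where "p l \<noteq> l" by (metis eq_id_iff)
      then have lm: "l < m" using p by (auto simp: permutes_def)
      then have "delta r s lam (?is ! l) (?js ! p l) = 0" using ent[of p l] p \<open>p l \<noteq> l\<close> by auto
      then have "(\<Prod>l<m. delta r s lam (?is ! l) (?js ! p l)) = 0" using lm by (intro prod_zero) auto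
      then show ?thesis using False by simp
    qed simp
  qed
  also have "\<dots> = ?f id"
    by (subst sum.delta) (use finite_permutations[of "{..<m}"] permutes_id[of "{..<m}"] in auto)
  also have "\<dots> = (\<Prod>l<m. t_pow (lam (r - m + l)))"
    using ent[OF permutes_id] by (simp add: sign_id)
  also have "\<dots> = t_pow (\<Sum>l<m. lam (r - m + l))" by (simp add: t_pow_sum)
  also have "(\<Sum>l<m. lam (r - m + l)) = esum lam r m"
  proof -
    have "(+) (r - m) ` {0..<m} = {r-m..<r}" using image_add_atLeastLessThan[of "r-m" 0 m] mr by (simp only: add_0 le_add_diff_inverse)
    then have "{r-m..<r} = (\<lambda>l. r - m + l) ` {..<m}" by (simp add: atLeast0LessThan add.commute)
    then have "esum lam r m = (\<Sum>i\<in>(\<lambda>l. r - m + l) ` {..<m}. lam i)"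
      unfolding esum_def by simp
    also have "\<dots> = (\<Sum>l<m. lam (r - m + l))" by (subst sum.reindex) (auto simp: inj_on_def)
    finally show ?thesis ..
  qed
  finally show ?thesis .
qed

lemma V_delta: "r \<le> s \<Longrightarrow> pre_partition r lam \<Longrightarrow> V r s (delta r s lam) m (esum lam r m)"
  unfolding V_def using delta_minor_J by blast

lemma V_delta_upper: assumes "r \<le> s" "m \<le> r" "V r s (delta r s lam) m e"
  shows "e \<le> esum lam r m"
proof -
  have "set [r-m..<r] \<subseteq> {..<r}" "set [s-m..<s] \<subseteq> {..<s}" "length [r-m..<r] = m" "length [s-m..<s] = m"
    using assms by auto
  then have "inJ e (minor (delta r s lam) [r-m..<r] [s-m..<s])"
    using assms(3) unfolding V_def by blast
  then show ?thesis unfolding delta_minor_prefix[OF assms(1,2)] inJ_tpow .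
qed

lemma V_delta_lower: assumes "r \<le> s" "pre_partition r lam" "\<not> V r s (delta r s lam) m e"
  shows "esum lam r m < e"
proof (rule ccontr)
  assume "\<not> esum lam r m < e"
  then have "e \<le> esum lam r m" by simp
  then have "V r s (delta r s lam) m e" using V_delta[OF assms(1,2), of m] inJ_mono unfolding V_def by blast
  then show False using assms(3) by simp
qed


lemma mats_tr: "A \<in> mats r s \<Longrightarrow> tr A \<in> mats s r" unfolding mats_def tr_def by auto

lemma tr_one: "tr (mat_one n) = (mat_one n :: nat \<Rightarrow> nat \<Rightarrow> 'a::comm_ring_1)"
  unfolding tr_def mat_one_def by (intro ext) auto

lemma GL_tr: assumes "g \<in> GL_arc n" shows "tr g \<in> GL_arc n"
proof -
  obtain h where h: "h \<in> mats n n" "mat_mult n g h = mat_one n" "mat_mult n h g = mat_one n"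
    and g: "g \<in> mats n n" using assms unfolding GL_arc_def by auto
  have "mat_mult n (tr g) (tr h) = mat_one n" using h(3) by (metis tr_mult tr_one)
  moreover have "mat_mult n (tr h) (tr g) = mat_one n" using h(2) by (metis tr_mult tr_one)
  ultimately show ?thesis unfolding GL_arc_def using mats_tr h g by blast
qed

lemma GL_intro: assumes "g \<in> mats n n" "h \<in> mats n n" "mat_mult n g h = mat_one n" "mat_mult n h g = mat_one n"
  shows "g \<in> GL_arc n" "h \<in> GL_arc n"
  using assms unfolding GL_arc_def by blast+

lemma minor_single: "minor A [i] [j] = A i j"
proof -
  have "{p. p permutes {..<Suc 0}} = {id}"
    by (auto simp: lessThan_Suc)
  then show ?thesis unfolding minor_def by (simp add: sign_id)
qed

definition sw :: "nat \<Rightarrow> nat \<Rightarrow> nat \<Rightarrow> nat" where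
  "sw a b i = (if i = a then b else if i = b then a else i)"

lemma sw_sw[simp]: "sw a b (sw a b i) = i" unfolding sw_def by auto

lemma sw_lt: "a < n \<Longrightarrow> b < n \<Longrightarrow> (sw a b i < n) = (i < n)" unfolding sw_def by auto

definition swapm :: "nat \<Rightarrow> nat \<Rightarrow> nat \<Rightarrow> nat \<Rightarrow> nat \<Rightarrow> complex fps" where
  "swapm n a b = (\<lambda>i j. if i < n \<and> j < n \<and> j = sw a b i then 1 else 0)"

lemma swapm_mult_left: assumes "a < n" "b < n"
  shows "mat_mult n (swapm n a b) X i j = (if i < n then X (sw a b i) j else 0)"
proof -
  have "mat_mult n (swapm n a b) X i j = (\<Sum>l<n. if sw a b i = l then (if i < n then X l j else 0) else 0)"
    unfolding mat_mult_def swapm_def using assms by (intro sum.cong) (auto simp: sw_lt)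
  then show ?thesis using assms by (simp add: sum_delta_l sw_lt)
qed

lemma swapm_mult_right: assumes "a < n" "b < n"
  shows "mat_mult n X (swapm n a b) i j = (if j < n then X i (sw a b j) else 0)"
proof -
  have "mat_mult n X (swapm n a b) i j = (\<Sum>l<n. if l = sw a b j then (if j < n then X i l else 0) else 0)"
    unfolding mat_mult_def swapm_def using assms by (intro sum.cong) (auto simp: sw_lt)
  then show ?thesis using assms by (simp add: sum_delta_r sw_lt)
qed

lemma swapm_mats: "swapm n a b \<in> mats n n" unfolding swapm_def mats_def by auto

lemma swapm_sq: assumes "a < n" "b < n" shows "mat_mult n (swapm n a b) (swapm n a b) = mat_one n"
  apply (intro ext)
  apply (subst swapm_mult_left[OF assms])
  apply (auto simp: swapm_def mat_one_def sw_lt[OF assms])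
  done

lemma swapm_GL: assumes "a < n" "b < n" shows "swapm n a b \<in> GL_arc n"
  using GL_intro[OF swapm_mats swapm_mats swapm_sq[OF assms] swapm_sq[OF assms]] by simp

definition ext :: "nat \<Rightarrow> (nat \<Rightarrow> nat \<Rightarrow> complex fps) \<Rightarrow> complex fps \<Rightarrow> nat \<Rightarrow> nat \<Rightarrow> complex fps" where
  "ext n g z = (\<lambda>i j. if i < n \<and> j < n then g i j else if i = n \<and> j = n then z else 0)"

lemma ext_mult_left:
  "mat_mult (Suc n) (ext n g z) X i j = (if i < n then mat_mult n g X i j else if i = n then z * X n j else 0)"
  unfolding mat_mult_def ext_def by (auto simp: lessThan_Suc intro!: sum.cong)

lemma ext_mult_right:
  "mat_mult (Suc n) X (ext n g z) i j = (if j < n then mat_mult n X g i j else if j = n then X i n * z else 0)"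
  unfolding mat_mult_def ext_def by (auto simp: lessThan_Suc intro!: sum.cong)

lemma ext_mats: "g \<in> mats n n \<Longrightarrow> ext n g z \<in> mats (Suc n) (Suc n)"
  unfolding ext_def mats_def by auto

lemma ext_ext: assumes "g' \<in> mats n n"
  shows "mat_mult (Suc n) (ext n g z) (ext n g' z') = ext n (mat_mult n g g') (z * z')"
proof (intro ext)
  fix i j
  have "\<And>i. i < n \<Longrightarrow> mat_mult n g (ext n g' z') i j = (if j < n then mat_mult n g g' i j else 0)"
    unfolding mat_mult_def ext_def using assms unfolding mats_def by auto
  then show "mat_mult (Suc n) (ext n g z) (ext n g' z') i j = ext n (mat_mult n g g') (z * z') i j"
    unfolding ext_mult_left by (auto simp: ext_def)
qed

lemma ext_one: "ext n (mat_one n) 1 = mat_one (Suc n)"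
  unfolding ext_def mat_one_def by (intro ext) auto

lemma ext_GL: assumes "g \<in> GL_arc n" "z * w = 1" shows "ext n g z \<in> GL_arc (Suc n)"
proof -
  obtain h where h: "h \<in> mats n n" "mat_mult n g h = mat_one n" "mat_mult n h g = mat_one n"
    and g: "g \<in> mats n n" using assms unfolding GL_arc_def by auto
  have wz: "w * z = 1" using assms(2) by (simp add: mult.commute)
  show ?thesis
    by (rule GL_intro(1)[OF ext_mats[OF g] ext_mats[OF h(1)], of z w])
       (simp_all add: ext_ext h g ext_one assms(2) wz)
qed

definition colT :: "nat \<Rightarrow> (nat \<Rightarrow> complex fps) \<Rightarrow> nat \<Rightarrow> nat \<Rightarrow> complex fps" where
  "colT n v = (\<lambda>i j. (if i = j \<and> i \<le> n then 1 else 0) + (if j = n \<and> i < n then v i else 0))"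

lemma colT_mult: "mat_mult (Suc n) (colT n v) X i j = (if i \<le> n then X i j else 0) + (if i < n then v i * X n j else 0)"
proof -
  have "mat_mult (Suc n) (colT n v) X i j =
     (\<Sum>l<Suc n. (if i = l then (if i \<le> n then X l j else 0) else 0) + (if l = n then (if i < n then v i * X l j else 0) else 0))"
    unfolding mat_mult_def colT_def by (intro sum.cong) (auto simp: distrib_right)
  also have "\<dots> = (if i \<le> n then X i j else 0) + (if i < n then v i * X n j else 0)"
    by (simp add: sum.distrib sum_delta_l sum_delta_r)
  finally show ?thesis .
qed

lemma colT_mats: "colT n v \<in> mats (Suc n) (Suc n)" unfolding colT_def mats_def by auto

lemma colT_colT: "mat_mult (Suc n) (colT n v) (colT n w) = colT n (\<lambda>i. v i + w i)"
  apply (intro ext)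
  apply (subst colT_mult)
  apply (auto simp: colT_def)
  done

lemma colT_zero: "colT n (\<lambda>i. 0) = mat_one (Suc n)"
  unfolding colT_def mat_one_def by (intro ext) auto

lemma colT_GL: "colT n v \<in> GL_arc (Suc n)"
  by (rule GL_intro(1)[OF colT_mats colT_mats, of _ _ "\<lambda>i. - v i"]) (simp_all add: colT_colT colT_zero)

definition rowT :: "nat \<Rightarrow> (nat \<Rightarrow> complex fps) \<Rightarrow> nat \<Rightarrow> nat \<Rightarrow> complex fps" where
  "rowT n w = tr (colT n w)"

lemma rowT_GL: "rowT n w \<in> GL_arc (Suc n)" unfolding rowT_def by (rule GL_tr[OF colT_GL])

lemma rowT_mult: "mat_mult (Suc n) X (rowT n w) i j = (if j \<le> n then X i j else 0) + (if j < n then X i n * w j else 0)"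
proof -
  have "mat_mult (Suc n) X (rowT n w) i j = tr (mat_mult (Suc n) (colT n w) (tr X)) i j"
    unfolding rowT_def tr_mult by simp
  also have "\<dots> = mat_mult (Suc n) (colT n w) (tr X) j i" by (simp add: tr_def)
  finally show ?thesis by (simp add: tr_def colT_mult mult.commute)
qed


lemma inJ_diff: "inJ e f \<Longrightarrow> inJ e g \<Longrightarrow> inJ e (f - g)" unfolding inJ_def by simp

lemma inJ_decomp: assumes "inJ (enat a) f" shows "f = fps_X ^ a * fps_shift a f"
proof (rule fps_conv_fps_X_power_mult_fps_shift)
  show "f = 0 \<or> a \<le> subdegree f"
  proof (cases "f = 0")
    case False
    then show ?thesis using assms unfolding inJ_def by (auto intro!: subdegree_geI)
  qed simp
qed

lemma t_pow_inf[simp]: "t_pow \<infinity> = 0" by (simp add: t_pow_def)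

lemma mat_mult_zero_left: "mat_mult n (\<lambda>i j. 0) B = (\<lambda>i j. 0)" unfolding mat_mult_def by simp

lemma mat_one_GL: "mat_one n \<in> GL_arc n"
  using GL_intro(1)[OF mat_one_mats mat_one_mats] mat_one_left[OF mat_one_mats] by blast

lemma zero_case:
  assumes "\<forall>i j. A i j = 0" "r \<le> s"
  shows "\<exists>lam g k. pre_partition r lam \<and> g \<in> GL_arc r \<and> k \<in> GL_arc s \<and>
     A = mat_mult s (mat_mult r g (delta r s lam)) k"
proof (intro exI conjI)
  have d: "delta r s (\<lambda>_. \<infinity>) = (\<lambda>i j. 0)" unfolding delta_def by (intro ext) simp
  have z: "mat_mult r (mat_one r) (\<lambda>i j. 0) = (\<lambda>i j. 0 :: complex fps)" unfolding mat_mult_def by simp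
  have A0: "A = (\<lambda>i j. 0)" using assms(1) by (intro ext) simp
  show "A = mat_mult s (mat_mult r (mat_one r) (delta r s (\<lambda>_. \<infinity>))) (mat_one s)"
    unfolding d z A0 mat_mult_zero_left ..
qed (auto simp: pre_partition_def mat_one_GL)

lemma delta_Suc_restrict: assumes "l' < r" "r \<le> S"
  shows "delta (Suc r) (Suc S) lam l' l = delta r S lam l' l"
  using assms unfolding delta_def by auto

lemma SNF:
  assumes "r \<le> s" "A \<in> mats r s"
  shows "\<exists>lam g k. pre_partition r lam \<and> g \<in> GL_arc r \<and> k \<in> GL_arc s \<and>
     A = mat_mult s (mat_mult r g (delta r s lam)) k"
  using assms
proof (induction r arbitrary: s A)
  case 0
  then show ?case by (intro zero_case) (auto simp: mats_def)
next
  case (Suc r)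
  obtain S where s: "s = Suc S" using Suc(2) by (cases s) auto
  have rS: "r \<le> S" using Suc(2) s by simp
  have Am: "A \<in> mats (Suc r) (Suc S)" using Suc(3) s by simp
  show ?case
  proof (cases "\<forall>i j. A i j = 0")
    case True
    then show ?thesis using zero_case Suc(2) by blast
  next
    case False
    define P where "P a \<longleftrightarrow> (\<exists>i j. A i j \<noteq> 0 \<and> subdegree (A i j) = a)" for a
    have exP: "\<exists>a. P a" using False unfolding P_def by auto
    define a where "a = (LEAST a. P a)"
    have "P a" unfolding a_def by (rule LeastI_ex[OF exP])
    then obtain i0 j0 where ij0: "A i0 j0 \<noteq> 0" "subdegree (A i0 j0) = a"
      unfolding P_def by auto
    have i0: "i0 < Suc r"
    proof (rule ccontr)
      assume "\<not> i0 < Suc r" then have "A i0 j0 = 0" using Am unfolding mats_def by simp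
      then show False using ij0 by simp
    qed
    have j0: "j0 < Suc S"
    proof (rule ccontr)
      assume "\<not> j0 < Suc S" then have "A i0 j0 = 0" using Am unfolding mats_def by simp
      then show False using ij0 by simp
    qed
    have AJ: "inJ (enat a) (A i j)" for i j
    proof (cases "A i j = 0")
      case False
      then have "P (subdegree (A i j))" unfolding P_def by auto
      then have "a \<le> subdegree (A i j)" unfolding a_def by (rule Least_le)
      then show ?thesis unfolding inJ_def by (auto intro!: nth_less_subdegree_zero)
    qed simp
    define P1 where "P1 = swapm (Suc r) i0 r"
    define Q1 where "Q1 = swapm (Suc S) j0 S"
    define A1 where "A1 = mat_mult (Suc S) (mat_mult (Suc r) P1 A) Q1"
    have A1e: "A1 i j = (if i < Suc r \<and> j < Suc S then A (sw i0 r i) (sw j0 S j) else 0)" for i j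
      unfolding A1_def P1_def Q1_def using i0 j0
      by (simp add: swapm_mult_right swapm_mult_left)
    have A1J: "inJ (enat a) (A1 i j)" for i j unfolding A1e using AJ by simp
    have A_eq: "A = mat_mult (Suc S) (mat_mult (Suc r) P1 A1) Q1"
    proof -
      have "mat_mult (Suc S) (mat_mult (Suc r) P1 A1) Q1 =
         mat_mult (Suc S) (mat_mult (Suc r) (mat_mult (Suc r) P1 P1) A) (mat_mult (Suc S) Q1 Q1)"
        unfolding A1_def by (simp add: mat_mult_assoc)
      also have "\<dots> = A" unfolding P1_def Q1_def using i0 j0 Am
        by (simp add: swapm_sq mat_one_left mat_one_right)
      finally show ?thesis ..
    qed
    define p where "p = A1 r S"
    have p_eq: "p = A i0 j0" unfolding p_def A1e by (simp add: sw_def)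
    define u where "u = fps_shift a p"
    have u0: "fps_nth u 0 \<noteq> 0" unfolding u_def using ij0 p_eq nth_subdegree_nonzero by fastforce
    have pu: "p = fps_X ^ a * u" unfolding u_def using inJ_decomp A1J p_def by blast
    define ui where "ui = inverse u"
    have uui: "u * ui = 1" unfolding ui_def using inverse_mult_eq_1'[OF u0] .
    define \<gamma> where "\<gamma> i = fps_shift a (A1 i S) * ui" for i
    define \<beta> where "\<beta> j = fps_shift a (A1 r j) * ui" for j
    have \<gamma>p: "\<gamma> i * p = A1 i S" for i
    proof -
      have "\<gamma> i * p = (fps_X ^ a * fps_shift a (A1 i S)) * (u * ui)" unfolding \<gamma>_def pu by (simp add: mult_ac)
      then show ?thesis using uui inJ_decomp[OF A1J] by simp
    qed
    have p\<beta>: "p * \<beta> j = A1 r j" for j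
    proof -
      have "p * \<beta> j = (fps_X ^ a * fps_shift a (A1 r j)) * (u * ui)" unfolding \<beta>_def pu by (simp add: mult_ac)
      then show ?thesis using uui inJ_decomp[OF A1J] by simp
    qed
    define B where "B i j = (if i < r \<and> j < S then A1 i j - \<gamma> i * A1 r j else 0)" for i j
    have Bm: "B \<in> mats r S" unfolding B_def mats_def by auto
    have BJ: "inJ (enat a) (B i j)" for i j unfolding B_def using A1J by (auto intro!: inJ_diff inJ_mult_left)
    obtain lam' g' k' where IH: "pre_partition r lam'" "g' \<in> GL_arc r" "k' \<in> GL_arc S"
      "B = mat_mult S (mat_mult r g' (delta r S lam')) k'"
      using Suc.IH[OF rS Bm] by blast
    define M where "M i j = (if i < r \<and> j < S then B i j else if i = r \<and> j = S then p else 0)" for i j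
    define L where "L = colT r \<gamma>"
    define R where "R = rowT S \<beta>"
    have A1_LMR: "A1 = mat_mult (Suc S) (mat_mult (Suc r) L M) R"
    proof (intro ext)
      fix i j
      have A1z: "A1 i j = 0" if "\<not> (i < Suc r \<and> j < Suc S)" using that unfolding A1e by auto
      have e: "mat_mult (Suc S) (mat_mult (Suc r) L M) R i j =
        (if j \<le> S then (if i \<le> r then M i j else 0) + (if i < r then \<gamma> i * M r j else 0) else 0) +
        (if j < S then ((if i \<le> r then M i S else 0) + (if i < r then \<gamma> i * M r S else 0)) * \<beta> j else 0)"
        unfolding L_def R_def rowT_mult colT_mult ..
      show "A1 i j = mat_mult (Suc S) (mat_mult (Suc r) L M) R i j"
      proof (cases "i < Suc r \<and> j < Suc S")
        case False
        then show ?thesis unfolding e using A1z by (auto simp: M_def)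
      next
        case True
        then consider "i < r" "j < S" | "i < r" "j = S" | "i = r" "j < S" | "i = r" "j = S" by linarith
        then show ?thesis
        proof cases
          case 1
          then have "mat_mult (Suc S) (mat_mult (Suc r) L M) R i j = A1 i j - \<gamma> i * A1 r j + \<gamma> i * p * \<beta> j"
            unfolding e by (simp add: M_def B_def)
          then show ?thesis using p\<beta>[of j] by (simp add: mult.assoc)
        next
          case 2
          then show ?thesis unfolding e using \<gamma>p[of i] by (simp add: M_def B_def)
        next
          case 3
          then show ?thesis unfolding e using p\<beta>[of j] by (simp add: M_def B_def)
        next
          case 4
          then show ?thesis unfolding e by (simp add: M_def B_def p_def)
        qed
      qed
    qed
    define lam where "lam i = (if i < r then lam' i else enat a)" for i
    define G where "G = ext r g' 1"
    define K where "K = ext S k' u"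
    define D where "D = delta (Suc r) (Suc S) lam"
    define D' where "D' = delta r S lam'"
    have GD: "mat_mult (Suc r) G D i l = (if i < r then mat_mult r g' D' i l else if i = r then D r l else 0)" for i l
    proof -
      have "mat_mult r g' D i l = mat_mult r g' D' i l"
        unfolding mat_mult_def D_def D'_def using rS
        by (intro sum.cong refl arg_cong2[where f="(*)"]) (auto simp: delta_def lam_def)
      then show ?thesis unfolding G_def ext_mult_left by simp
    qed
    have D'S: "mat_mult r g' D' i S = 0" for i
      unfolding mat_mult_def D'_def delta_def using rS by (intro sum.neutral) auto
    have Dr: "D r l = (if l = S then fps_X ^ a else 0)" for l
      unfolding D_def delta_def lam_def t_pow_def using rS by auto
    have M_eq: "M = mat_mult (Suc S) (mat_mult (Suc r) G D) K"
    proof (intro ext)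
      fix i j
      have "mat_mult S (mat_mult (Suc r) G D) k' i j = (if i < r then B i j else 0)" if "j < S"
      proof (cases "i < r")
        case True
        have "mat_mult S (mat_mult (Suc r) G D) k' i j = mat_mult S (mat_mult r g' D') k' i j"
          unfolding mat_mult_def[of S] GD using True by simp
        then show ?thesis using True IH(4) D'_def that by (simp add: B_def)
      next
        case False
        then show ?thesis unfolding mat_mult_def[of S] GD Dr by (simp, intro sum.neutral) auto
      qed
      then show "M i j = mat_mult (Suc S) (mat_mult (Suc r) G D) K i j"
        unfolding K_def ext_mult_right GD using D'S Dr pu Bm
        by (auto simp: M_def mats_def)
    qed
    have pp: "pre_partition (Suc r) lam"
    proof -
      have lb: "enat a \<le> lam' i" if "i < r" for i
      proof -
        have "V r S B 1 (enat a)"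
          unfolding V_def
        proof (intro allI impI)
          fix "is" js :: "nat list" assume "length is = 1" "length js = 1"
          then obtain i j where "is = [i]" "js = [j]" by (metis One_nat_def length_0_conv length_Suc_conv)
          then show "inJ (enat a) (minor B is js)" using BJ[of i j] minor_single[of B i j] by simp
        qed
        then have "V r S (delta r S lam') 1 (enat a)"
          using V_invariant[OF delta_mats[OF rS] IH(2,3), where m=1 and e="enat a"] IH(4) by simp
        then have "enat a \<le> esum lam' r 1" using V_delta_upper[OF rS] that by simp
        also have "esum lam' r 1 = lam' (r - 1)"
        proof -
          have "{r - 1..<r} = {r - 1}" using that by auto
          then show ?thesis unfolding esum_def by simp
        qed
        also have "\<dots> \<le> lam' i" using IH(1) that unfolding pre_partition_def by auto
        finally show ?thesis .
      qed
      show ?thesis unfolding pre_partition_def lam_def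
        using IH(1) lb unfolding pre_partition_def by auto
    qed
    have uiu: "1 * 1 = (1::complex fps)" by simp
    have GL: "P1 \<in> GL_arc (Suc r)" "L \<in> GL_arc (Suc r)" "G \<in> GL_arc (Suc r)"
      "K \<in> GL_arc (Suc S)" "R \<in> GL_arc (Suc S)" "Q1 \<in> GL_arc (Suc S)"
      unfolding P1_def L_def G_def K_def R_def Q1_def using i0 j0
      by (auto intro!: swapm_GL colT_GL rowT_GL ext_GL IH(2,3) uui)
    have "A = mat_mult (Suc S) (mat_mult (Suc r) (mat_mult (Suc r) (mat_mult (Suc r) P1 L) G) D)
        (mat_mult (Suc S) (mat_mult (Suc S) K R) Q1)"
      unfolding A_eq A1_LMR M_eq by (simp add: mat_mult_assoc)
    then show ?thesis unfolding s D_def using pp GL by (blast intro: GL_arc_mult)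
  qed
qed


lemma poly_sum: "finite S \<Longrightarrow> (\<And>i. i \<in> S \<Longrightarrow> f i \<in> poly_funs) \<Longrightarrow> (\<lambda>x. \<Sum>i\<in>S. f i x) \<in> poly_funs"
proof (induction S rule: finite_induct)
  case empty then show ?case using poly_funs.const[of 0] by simp
next
  case (insert a S)
  then show ?case using poly_funs.add[of "f a" "\<lambda>x. \<Sum>i\<in>S. f i x"] by simp
qed

definition polyfps :: "(('v \<Rightarrow> complex) \<Rightarrow> complex fps) \<Rightarrow> bool" where
  "polyfps F \<longleftrightarrow> (\<forall>d. (\<lambda>x. fps_nth (F x) d) \<in> poly_funs)"

lemma polyfps_const: "polyfps (\<lambda>x. c)" unfolding polyfps_def by (simp add: poly_funs.const)

lemma polyfps_add: "polyfps F \<Longrightarrow> polyfps G \<Longrightarrow> polyfps (\<lambda>x. F x + G x)"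
  unfolding polyfps_def by (simp add: poly_funs.add)

lemma polyfps_mult: assumes "polyfps F" "polyfps G" shows "polyfps (\<lambda>x. F x * G x)"
  unfolding polyfps_def
proof
  fix d
  have "(\<lambda>x. \<Sum>i\<in>{0..d}. fps_nth (F x) i * fps_nth (G x) (d - i)) \<in> poly_funs"
    using assms unfolding polyfps_def by (intro poly_sum poly_funs.mult) auto
  then show "(\<lambda>x. fps_nth (F x * G x) d) \<in> poly_funs" by (simp add: fps_mult_nth)
qed

lemma polyfps_sum: "finite S \<Longrightarrow> (\<And>i. i \<in> S \<Longrightarrow> polyfps (F i)) \<Longrightarrow> polyfps (\<lambda>x. \<Sum>i\<in>S. F i x)"
proof (induction S rule: finite_induct)
  case empty then show ?case using polyfps_const[of 0] by simp
next
  case (insert a S)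
  then show ?case using polyfps_add[of "F a" "\<lambda>x. \<Sum>i\<in>S. F i x"] by simp
qed

lemma polyfps_prod: "finite S \<Longrightarrow> (\<And>i. i \<in> S \<Longrightarrow> polyfps (F i)) \<Longrightarrow> polyfps (\<lambda>x. \<Prod>i\<in>S. F i x)"
proof (induction S rule: finite_induct)
  case empty then show ?case using polyfps_const[of 1] by simp
next
  case (insert a S)
  then show ?case using polyfps_mult[of "F a" "\<lambda>x. \<Prod>i\<in>S. F i x"] by simp
qed

lemma polyfps_jet: "polyfps (\<lambda>x. jet_mat x i j)"
  unfolding polyfps_def jet_mat_def by (simp add: poly_funs.var)

lemma polyfps_minor: "polyfps (\<lambda>x. minor (jet_mat x) is js)"
  unfolding minor_def
  by (intro polyfps_sum polyfps_mult polyfps_const polyfps_prod polyfps_jet finite_permutations) auto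

definition eqn :: "nat \<Rightarrow> complex fps \<Rightarrow> complex fps \<Rightarrow> bool" where
  "eqn n f g \<longleftrightarrow> (\<forall>d\<le>n. fps_nth f d = fps_nth g d)"

lemma eqn_add: "eqn n f g \<Longrightarrow> eqn n f' g' \<Longrightarrow> eqn n (f + f') (g + g')" unfolding eqn_def by simp

lemma eqn_mult: assumes "eqn n f g" "eqn n f' g'" shows "eqn n (f * f') (g * g')"
  unfolding eqn_def fps_mult_nth using assms unfolding eqn_def by (auto intro!: sum.cong)

lemma eqn_refl: "eqn n f f" unfolding eqn_def by simp

lemma eqn_sum: "finite S \<Longrightarrow> (\<And>i. i \<in> S \<Longrightarrow> eqn n (f i) (g i)) \<Longrightarrow> eqn n (\<Sum>i\<in>S. f i) (\<Sum>i\<in>S. g i)"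
  by (induction S rule: finite_induct) (auto intro: eqn_add eqn_refl)

lemma eqn_prod: "finite S \<Longrightarrow> (\<And>i. i \<in> S \<Longrightarrow> eqn n (f i) (g i)) \<Longrightarrow> eqn n (\<Prod>i\<in>S. f i) (\<Prod>i\<in>S. g i)"
  by (induction S rule: finite_induct) (auto intro: eqn_mult eqn_refl)

lemma eqn_minor: "eqn n (minor (jet_mat (trunc n A)) is js) (minor A is js)"
  unfolding minor_def
proof (intro eqn_sum eqn_mult eqn_refl eqn_prod finite_permutations)
  fix l p
  show "eqn n (jet_mat (trunc n A) (is ! l) (js ! p l)) (A (is ! l) (js ! p l))"
    unfolding eqn_def jet_mat_def trunc_def by simp
qed auto

lemma trunc_jets: "A \<in> mats r s \<Longrightarrow> trunc n A \<in> jets r s n"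
  unfolding jets_def trunc_def mats_def by auto

lemma closed_inter: assumes "zariski_closed_in X Z1" "zariski_closed_in X Z2"
  shows "zariski_closed_in X (Z1 \<inter> Z2)"
proof -
  obtain F1 where F1: "F1 \<subseteq> poly_funs" "Z1 = {x \<in> X. \<forall>f\<in>F1. f x = 0}"
    using assms(1) unfolding zariski_closed_in_def by blast
  obtain F2 where F2: "F2 \<subseteq> poly_funs" "Z2 = {x \<in> X. \<forall>f\<in>F2. f x = 0}"
    using assms(2) unfolding zariski_closed_in_def by blast
  note F = F1 F2
  have "Z1 \<inter> Z2 = {x \<in> X. \<forall>f\<in>F1 \<union> F2. f x = 0}" using F by auto
  then show ?thesis unfolding zariski_closed_in_def using F by blast
qed

lemma closed_union: assumes "zariski_closed_in X Z1" "zariski_closed_in X Z2"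
  shows "zariski_closed_in X (Z1 \<union> Z2)"
proof -
  obtain F1 where F1: "F1 \<subseteq> poly_funs" "Z1 = {x \<in> X. \<forall>f\<in>F1. f x = 0}"
    using assms(1) unfolding zariski_closed_in_def by blast
  obtain F2 where F2: "F2 \<subseteq> poly_funs" "Z2 = {x \<in> X. \<forall>f\<in>F2. f x = 0}"
    using assms(2) unfolding zariski_closed_in_def by blast
  note F = F1 F2
  define F where "F = {(\<lambda>x. f x * g x) | f g. f \<in> F1 \<and> g \<in> F2}"
  have "F \<subseteq> poly_funs" using F unfolding F_def by (auto intro: poly_funs.mult)
  moreover have "Z1 \<union> Z2 = {x \<in> X. \<forall>h\<in>F. h x = 0}"
  proof safe
    fix x assume x: "x \<in> X" "\<forall>h\<in>F. h x = 0" "x \<notin> Z2"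
    then obtain g where g: "g \<in> F2" "g x \<noteq> 0" using F by auto
    have "\<forall>f\<in>F1. f x = 0"
    proof
      fix f assume "f \<in> F1"
      then have "(\<lambda>x. f x * g x) \<in> F" unfolding F_def using g by blast
      with x(2) have "(\<lambda>x. f x * g x) x = 0" by (rule bspec)
      then have "f x * g x = 0" by simp
      then show "f x = 0" using g by simp
    qed
    then show "x \<in> Z1" unfolding F(2) using x by simp
  qed (use F F_def in auto)
  ultimately show ?thesis unfolding zariski_closed_in_def by blast
qed

lemma closed_X: "zariski_closed_in X X" unfolding zariski_closed_in_def by (intro exI[of _ "{}"]) auto

lemma closed_empty: "zariski_closed_in X {}"
  unfolding zariski_closed_in_def by (intro exI[of _ "{\<lambda>x. 1}"]) (auto intro: poly_funs.const)

lemma locally_closed_inter: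
  assumes "locally_closed_in X L1" "locally_closed_in X L2" shows "locally_closed_in X (L1 \<inter> L2)"
proof -
  obtain U1 Z1 U2 Z2 where h: "zariski_open_in X U1" "U1 \<subseteq> X" "zariski_closed_in X Z1" "L1 = U1 \<inter> Z1"
    "zariski_open_in X U2" "U2 \<subseteq> X" "zariski_closed_in X Z2" "L2 = U2 \<inter> Z2"
    using assms unfolding locally_closed_in_def by metis
  have "zariski_open_in X (U1 \<inter> U2)" using h closed_union[of X "X - U1" "X - U2"]
    unfolding zariski_open_in_def by (simp add: Diff_Int)
  then show ?thesis unfolding locally_closed_in_def using h closed_inter[of X Z1 Z2]
    by (intro exI[of _ "U1 \<inter> U2"] exI[of _ "Z1 \<inter> Z2"]) auto
qed

lemma locally_closed_X: "locally_closed_in X X"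
  unfolding locally_closed_in_def zariski_open_in_def
  by (intro exI[of _ X] exI[of _ X]) (simp add: closed_X closed_empty)

lemma locally_closed_closed: "zariski_closed_in X Z \<Longrightarrow> locally_closed_in X (X \<inter> Z)"
  unfolding locally_closed_in_def zariski_open_in_def
  by (intro exI[of _ X] exI[of _ Z]) (simp add: closed_empty)

lemma locally_closed_diff: "zariski_closed_in X Z \<Longrightarrow> zariski_closed_in X Z' \<Longrightarrow> locally_closed_in X (Z - Z')"
proof -
  assume a: "zariski_closed_in X Z" "zariski_closed_in X Z'"
  have Z: "Z \<subseteq> X" using a(1) unfolding zariski_closed_in_def by auto
  have Z': "Z' \<subseteq> X" using a(2) unfolding zariski_closed_in_def by auto
  have "zariski_open_in X (X - Z')" unfolding zariski_open_in_def using a(2) Z' by (simp add: double_diff)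
  then show ?thesis unfolding locally_closed_in_def using a(1) Z
    by (intro exI[of _ "X - Z'"] exI[of _ Z]) auto
qed

lemma locally_closed_Inter: "finite I \<Longrightarrow> (\<And>i. i \<in> I \<Longrightarrow> locally_closed_in X (L i)) \<Longrightarrow>
   locally_closed_in X (X \<inter> (\<Inter>i\<in>I. L i))"
proof (induction I rule: finite_induct)
  case empty then show ?case using locally_closed_X by simp
next
  case (insert a I)
  have "X \<inter> (\<Inter>i\<in>insert a I. L i) = L a \<inter> (X \<inter> (\<Inter>i\<in>I. L i))" by auto
  moreover have "locally_closed_in X (L a \<inter> (X \<inter> (\<Inter>i\<in>I. L i)))"
    by (rule locally_closed_inter) (use insert in auto)
  ultimately show ?case by simp
qed

lemma closed_polys: "(\<And>c. c \<in> T \<Longrightarrow> f c \<in> poly_funs) \<Longrightarrow> zariski_closed_in X {x \<in> X. \<forall>c\<in>T. f c x = 0}"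
proof -
  assume a: "\<And>c. c \<in> T \<Longrightarrow> f c \<in> poly_funs"
  have "{x \<in> X. \<forall>c\<in>T. f c x = 0} = {x \<in> X. \<forall>g\<in>f ` T. g x = 0}" by auto
  moreover have "f ` T \<subseteq> poly_funs" using a by auto
  ultimately show ?thesis unfolding zariski_closed_in_def by blast
qed

lemma closed_coeffs:
  "zariski_closed_in X {x \<in> X. \<forall>c\<in>T. fps_nth (minor (jet_mat x) (fst c) (fst (snd c))) (snd (snd c)) = 0}"
  by (rule closed_polys[where f="\<lambda>c x. fps_nth (minor (jet_mat x) (fst c) (fst (snd c))) (snd (snd c))"])
     (use polyfps_minor in \<open>auto simp: polyfps_def\<close>)


lemma minor_indices_empty: assumes "r < m" shows "minor_indices r s m = {}"
proof (rule ccontr)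
  assume "minor_indices r s m \<noteq> {}"
  then obtain "is" js where h: "length is = m" "sorted_wrt (<) is" "set is \<subseteq> {..<r}"
    unfolding minor_indices_def by auto
  then have "distinct is" by (simp add: strict_sorted_iff)
  then have "card (set is) = m" using h distinct_card by blast
  moreover have "card (set is) \<le> r" using card_mono[OF _ h(3)] by simp
  ultimately show False using assms by simp
qed

lemma Dk_arcs_r: "Dk_arcs r s r = arcs r s"
  unfolding Dk_arcs_def using minor_indices_empty[of r "Suc r" s] by auto

lemma Dk_jets_sub: "Dk_jets r s k n \<subseteq> jets r s n" unfolding Dk_jets_def by auto

lemma esum_0[simp]: "esum lam r 0 = 0" unfolding esum_def by simp

lemma esum_Suc: assumes "Suc m \<le> r" shows "esum lam r (Suc m) = lam (r - Suc m) + esum lam r m"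
proof -
  have "{r - Suc m..<r} = insert (r - Suc m) {r - m..<r}" using assms by auto
  then show ?thesis unfolding esum_def using assms by simp
qed

lemma downclosed: assumes "T \<subseteq> {..<r}" "\<And>i j. i \<le> j \<Longrightarrow> j \<in> T \<Longrightarrow> i \<in> T" shows "T = {..<card T}"
proof (cases "T = {}")
  case False
  have fin: "finite T" using finite_subset[OF assms(1)] by simp
  define M where "M = Max T"
  have "T = {..M}" using Max_ge[OF fin] Max_in[OF fin False] assms(2) unfolding M_def by auto
  then show ?thesis by (simp add: lessThan_Suc_atMost)
qed simp

lemma enat_lt_plus1: "x < enat y + 1 \<Longrightarrow> x \<le> enat y"
  by (cases x) (auto simp: one_enat_def)

lemma closed_minor_coeffs:
  "zariski_closed_in X {x \<in> X. \<forall>is js d. P is js d \<longrightarrow> fps_nth (minor (jet_mat x) is js) d = 0}"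
proof -
  have "{x \<in> X. \<forall>is js d. P is js d \<longrightarrow> fps_nth (minor (jet_mat x) is js) d = 0} =
    {x \<in> X. \<forall>c\<in>{(is, js, d). P is js d}. (\<lambda>(is, js, d) x. fps_nth (minor (jet_mat x) is js) d) c x = 0}"
    by auto
  moreover have "zariski_closed_in X {x \<in> X. \<forall>c\<in>{(is, js, d). P is js d}. (\<lambda>(is, js, d) x. fps_nth (minor (jet_mat x) is js) d) c x = 0}"
    by (rule closed_polys) (use polyfps_minor in \<open>auto simp: polyfps_def\<close>)
  ultimately show ?thesis by simp
qed

lemma mat_mult_mats_GL: "g \<in> GL_arc r \<Longrightarrow> k \<in> GL_arc s \<Longrightarrow> D \<in> mats r s \<Longrightarrow>
   mat_mult s (mat_mult r g D) k \<in> mats r s"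
  by (intro mat_mult_mats GL_arc_mats) auto

context
  fixes r s k :: nat and lam :: "nat \<Rightarrow> enat"
  assumes rs: "r \<le> s" and pp: "pre_partition r lam" and kr: "k \<le> r"
    and ci: "card {i. i < r \<and> lam i = \<infinity>} = r - k"
begin

lemma inf_iff: assumes "i < r" shows "lam i = \<infinity> \<longleftrightarrow> i < r - k"
proof -
  have "{i. i < r \<and> lam i = \<infinity>} = {..<card {i. i < r \<and> lam i = \<infinity>}}"
  proof (rule downclosed[of _ r])
    fix i j assume "i \<le> j" "j \<in> {i. i < r \<and> lam i = \<infinity>}"
    then show "i \<in> {i. i < r \<and> lam i = \<infinity>}" using pp unfolding pre_partition_def
      by (metis (mono_tags, lifting) enat_ord_simps(5) le_less_trans mem_Collect_eq)
  qed auto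
  then have "{i. i < r \<and> lam i = \<infinity>} = {..<r - k}" using ci by simp
  then show ?thesis using assms by (metis (mono_tags, lifting) lessThan_iff mem_Collect_eq)
qed

lemma esum_fin: assumes "m \<le> k" shows "esum lam r m \<noteq> \<infinity>"
  using assms
proof (induction m)
  case (Suc m)
  have "lam (r - Suc m) \<noteq> \<infinity>" using inf_iff[of "r - Suc m"] Suc.prems kr by auto
  moreover have "esum lam r m \<noteq> \<infinity>" using Suc by simp
  ultimately show ?case using esum_Suc[of m r lam] Suc kr
    by (cases "lam (r - Suc m)"; cases "esum lam r m") auto
qed simp

lemma esum_inf: assumes "k < r" shows "esum lam r (Suc k) = \<infinity>"
proof -
  have "lam (r - Suc k) = \<infinity>" using inf_iff[of "r - Suc k"] assms by auto
  then show ?thesis using esum_Suc[of k r lam] assms by simp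
qed

lemma esum_mono: assumes "m \<le> k" shows "esum lam r m \<le> esum lam r k"
  unfolding esum_def by (rule sum_mono2) (use assms in auto)

definition Pc :: "(nat \<Rightarrow> nat \<Rightarrow> complex fps) \<Rightarrow> bool" where
  "Pc A \<longleftrightarrow> (\<forall>m\<in>{1..k}. V r s A m (esum lam r m) \<and> \<not> V r s A m (esum lam r m + 1))"

lemma Pc_inv: "A \<in> mats r s \<Longrightarrow> g \<in> GL_arc r \<Longrightarrow> h \<in> GL_arc s \<Longrightarrow> Pc (mat_mult s (mat_mult r g A) h) \<longleftrightarrow> Pc A"
  unfolding Pc_def using V_invariant by simp

lemma Pc_delta: "Pc (delta r s lam)"
  unfolding Pc_def
proof
  fix m assume m: "m \<in> {1..k}"
  show "V r s (delta r s lam) m (esum lam r m) \<and> \<not> V r s (delta r s lam) m (esum lam r m + 1)"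
  proof
    show "V r s (delta r s lam) m (esum lam r m)" using V_delta[OF rs pp] .
    show "\<not> V r s (delta r s lam) m (esum lam r m + 1)"
    proof
      assume "V r s (delta r s lam) m (esum lam r m + 1)"
      then have "esum lam r m + 1 \<le> esum lam r m" using V_delta_upper[OF rs] m kr by auto
      then show False using esum_fin[of m] m
        by (cases "esum lam r m") (auto simp: one_enat_def)
    qed
  qed
qed

lemma Dk_iff_V: assumes "A \<in> mats r s" shows "A \<in> Dk_arcs r s k \<longleftrightarrow> V r s A (Suc k) \<infinity>"
proof
  assume "A \<in> Dk_arcs r s k"
  then show "V r s A (Suc k) \<infinity>" unfolding V_def Dk_arcs_def inJ_infty
    using minor_zero_all[of r s "Suc k" A] by auto
next
  assume "V r s A (Suc k) \<infinity>"
  then show "A \<in> Dk_arcs r s k" unfolding V_def Dk_arcs_def inJ_infty minor_indices_def using assms by auto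
qed

lemma char: assumes A: "A \<in> mats r s"
  shows "A \<in> orbit r s lam \<longleftrightarrow> A \<in> Dk_arcs r s k \<and> Pc A"
proof
  assume "A \<in> orbit r s lam"
  then obtain g h where gh: "g \<in> GL_arc r" "h \<in> GL_arc s" "A = mat_mult s (mat_mult r g (delta r s lam)) h"
    unfolding orbit_alt[OF rs] by auto
  have "Pc A" using Pc_inv[OF delta_mats[OF rs] gh(1,2)] Pc_delta gh(3) by simp
  moreover have "A \<in> Dk_arcs r s k"
  proof (cases "k < r")
    case True
    have "V r s (delta r s lam) (Suc k) \<infinity>" using V_delta[OF rs pp, of "Suc k"] esum_inf[OF True] by simp
    then have "V r s A (Suc k) \<infinity>" using V_invariant[OF delta_mats[OF rs] gh(1,2)] gh(3) by simp
    then show ?thesis using Dk_iff_V[OF A] by simp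
  next
    case False
    then have "k = r" using kr by simp
    then show ?thesis using Dk_arcs_r A by simp
  qed
  ultimately show "A \<in> Dk_arcs r s k \<and> Pc A" by simp
next
  assume h: "A \<in> Dk_arcs r s k \<and> Pc A"
  obtain nu g h where snf: "pre_partition r nu" "g \<in> GL_arc r" "h \<in> GL_arc s"
    "A = mat_mult s (mat_mult r g (delta r s nu)) h"
    using SNF[OF rs A] by blast
  let ?D = "delta r s nu"
  have PD: "Pc ?D" using h Pc_inv[OF delta_mats[OF rs] snf(2,3)] snf(4) by simp
  have eq: "esum nu r m = esum lam r m" if "m \<le> k" for m
  proof (cases "m = 0")
    case False
    then have m: "m \<in> {1..k}" using that by simp
    have "esum lam r m \<le> esum nu r m" using PD m V_delta_upper[OF rs] kr unfolding Pc_def by auto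
    moreover have "esum nu r m < esum lam r m + 1" using PD m V_delta_lower[OF rs snf(1)] unfolding Pc_def by auto
    then have "esum nu r m \<le> esum lam r m" using esum_fin[of m] that
      by (cases "esum lam r m") (auto intro: enat_lt_plus1)
    ultimately show ?thesis by simp
  qed simp
  have nu_eq: "nu i = lam i" if i: "i < r" for i
  proof (cases "i < r - k")
    case False
    define m where "m = r - i - 1"
    have m: "Suc m \<le> k" "i = r - Suc m" using False i unfolding m_def by auto
    have "nu (r - Suc m) + esum nu r m = lam (r - Suc m) + esum lam r m"
      using eq[of "Suc m"] m kr esum_Suc[of m r nu] esum_Suc[of m r lam] by simp
    then have "nu (r - Suc m) = lam (r - Suc m)" using eq[of m] m esum_fin[of m]
      by (simp add: add.commute[of _ "esum lam r m"] enat_add_left_cancel)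
    then show ?thesis using m by simp
  next
    case True
    then have kr': "k < r" by simp
    have "V r s ?D (Suc k) \<infinity>" using Dk_iff_V[OF delta_mats[OF rs]] h
      V_invariant[OF delta_mats[OF rs] snf(2,3)] snf(4) Dk_iff_V[OF A] by simp
    then have "\<infinity> \<le> esum nu r (Suc k)" by (rule V_delta_upper[OF rs, rotated]) (use kr' in simp)
    then have "esum nu r (Suc k) = \<infinity>" by (cases "esum nu r (Suc k)") auto
    then have "nu (r - Suc k) + esum lam r k = \<infinity>" using esum_Suc[of k r nu] kr' eq[of k] by simp
    then have "nu (r - Suc k) = \<infinity>" using esum_fin[of k]
      by (cases "nu (r - Suc k)"; cases "esum lam r k") auto
    moreover have "nu (r - Suc k) \<le> nu i" using snf(1) True i kr' unfolding pre_partition_def by simp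
    ultimately have "nu i = \<infinity>" by (cases "nu i") auto
    then show ?thesis using inf_iff[OF i] True by simp
  qed
  have "?D = delta r s lam" unfolding delta_def using nu_eq by (intro ext) auto
  then show "A \<in> orbit r s lam" unfolding orbit_alt[OF rs] using snf by auto
qed


definition nn :: nat where "nn = the_enat (esum lam r k)"

definition VJ :: "(nat \<times> nat \<times> nat \<Rightarrow> complex) \<Rightarrow> nat \<Rightarrow> enat \<Rightarrow> bool" where
  "VJ x m e \<longleftrightarrow> (\<forall>is js. length is = m \<longrightarrow> length js = m \<longrightarrow> set is \<subseteq> {..<r} \<longrightarrow> set js \<subseteq> {..<s} \<longrightarrow>
      (\<forall>d. enat d < e \<longrightarrow> d \<le> nn \<longrightarrow> fps_nth (minor (jet_mat x) is js) d = 0))"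

lemma VJ_trunc: assumes "e \<le> enat (Suc nn)" shows "VJ (trunc nn A) m e \<longleftrightarrow> V r s A m e"
proof -
  have c: "fps_nth (minor (jet_mat (trunc nn A)) is js) d = fps_nth (minor A is js) d" if "d \<le> nn" for "is" js d
    using eqn_minor[of nn A "is" js] that unfolding eqn_def by simp
  have d: "enat d < e \<Longrightarrow> d \<le> nn" for d using assms
    by (metis Suc_le_eq enat_ord_simps(2) less_Suc_eq_le order_less_le_trans)
  show ?thesis unfolding VJ_def V_def inJ_def using c d by (metis (no_types, lifting))
qed

lemma esum_le_nn: assumes "m \<le> k" shows "esum lam r m \<le> enat nn"
proof -
  have "esum lam r k = enat nn" unfolding nn_def using esum_fin[of k] by (cases "esum lam r k") auto
  then show ?thesis using esum_mono[OF assms] by simp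
qed

lemma closed_VJ: "zariski_closed_in (jets r s nn) {x \<in> jets r s nn. VJ x m e}"
proof -
  have "{x \<in> jets r s nn. VJ x m e} = {x \<in> jets r s nn. \<forall>is js d. (length is = m \<and> length js = m \<and>
     set is \<subseteq> {..<r} \<and> set js \<subseteq> {..<s} \<and> enat d < e \<and> d \<le> nn) \<longrightarrow> fps_nth (minor (jet_mat x) is js) d = 0}"
    unfolding VJ_def by blast
  then show ?thesis by (simp only: closed_minor_coeffs)
qed

lemma closed_Dk: "zariski_closed_in (jets r s nn) (Dk_jets r s k nn)"
proof -
  have "Dk_jets r s k nn = {x \<in> jets r s nn. \<forall>is js d. ((is, js) \<in> minor_indices r s (Suc k) \<and> d \<le> nn)
     \<longrightarrow> fps_nth (minor (jet_mat x) is js) d = 0}"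
    unfolding Dk_jets_def by blast
  then show ?thesis by (simp only: closed_minor_coeffs)
qed

definition CC where "CC = Dk_jets r s k nn \<inter> (jets r s nn \<inter> (\<Inter>m\<in>{1..k}.
    {x \<in> jets r s nn. VJ x m (esum lam r m)} - {x \<in> jets r s nn. VJ x m (esum lam r m + 1)}))"

lemma CC_constructible: "constructible_in (jets r s nn) CC"
proof -
  have "locally_closed_in (jets r s nn) (jets r s nn \<inter> Dk_jets r s k nn)"
    by (rule locally_closed_closed[OF closed_Dk])
  then have a: "locally_closed_in (jets r s nn) (Dk_jets r s k nn)" using Dk_jets_sub
    by (metis inf.absorb2)
  have b: "locally_closed_in (jets r s nn) (jets r s nn \<inter> (\<Inter>m\<in>{1..k}.
    {x \<in> jets r s nn. VJ x m (esum lam r m)} - {x \<in> jets r s nn. VJ x m (esum lam r m + 1)}))"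
    by (intro locally_closed_Inter locally_closed_diff closed_VJ) auto
  have "locally_closed_in (jets r s nn) CC" unfolding CC_def by (rule locally_closed_inter[OF a b])
  then show ?thesis unfolding constructible_in_def by (intro exI[of _ "{CC}"]) auto
qed

lemma CC_sub: "CC \<subseteq> Dk_jets r s k nn" unfolding CC_def by auto

lemma trunc_Dk: assumes "A \<in> Dk_arcs r s k" shows "trunc nn A \<in> Dk_jets r s k nn"
proof -
  have "A \<in> mats r s" using assms unfolding Dk_arcs_def by auto
  moreover have "fps_nth (minor (jet_mat (trunc nn A)) is js) d = 0"
    if "(is, js) \<in> minor_indices r s (Suc k)" "d \<le> nn" for "is" js d
    using assms that eqn_minor[of nn A "is" js] unfolding Dk_arcs_def eqn_def by auto
  ultimately show ?thesis unfolding Dk_jets_def using trunc_jets by blast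
qed

lemma cyl: "cylinder_Dk r s k (orbit r s lam)"
  unfolding cylinder_Dk_def
proof (intro exI conjI)
  show "constructible_in (jets r s nn) CC" by (rule CC_constructible)
  show "CC \<subseteq> Dk_jets r s k nn" by (rule CC_sub)
  have e1: "esum lam r m \<le> enat (Suc nn)" "esum lam r m + 1 \<le> enat (Suc nn)" if "m \<in> {1..k}" for m
  proof -
    have "esum lam r m \<le> enat nn" using esum_le_nn that by simp
    then show "esum lam r m \<le> enat (Suc nn)" "esum lam r m + 1 \<le> enat (Suc nn)"
      by (cases "esum lam r m"; simp add: one_enat_def)+
  qed
  have Pc_iff: "trunc nn A \<in> CC \<longleftrightarrow> Pc A" if "A \<in> Dk_arcs r s k" for A
  proof -
    have A: "A \<in> mats r s" using that unfolding Dk_arcs_def by auto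
    show ?thesis unfolding CC_def Pc_def using trunc_Dk[OF that] trunc_jets[OF A] VJ_trunc e1 by auto
  qed
  show "orbit r s lam = {A \<in> Dk_arcs r s k. trunc nn A \<in> CC}"
  proof safe
    fix A assume a: "A \<in> orbit r s lam"
    have A: "A \<in> mats r s" using a unfolding orbit_alt[OF rs] using mat_mult_mats_GL delta_mats[OF rs] by blast
    show "A \<in> Dk_arcs r s k" using char[OF A] a by simp
    show "trunc nn A \<in> CC" using char[OF A] a Pc_iff by simp
  next
    fix A assume a: "A \<in> Dk_arcs r s k" "trunc nn A \<in> CC"
    have A: "A \<in> mats r s" using a unfolding Dk_arcs_def by auto
    show "A \<in> orbit r s lam" using char[OF A] a Pc_iff by simp
  qed
qed

end


theorem proposition3p4:
  fixes r s k :: nat and lam :: "nat \<Rightarrow> enat"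
  assumes "r \<le> s"
    and "pre_partition r lam"
  shows "(is_partition r lam \<longrightarrow> cylinder_M r s (orbit r s lam))
       \<and> ((k \<le> r \<and> card {i. i < r \<and> lam i = \<infinity>} = r - k) \<longrightarrow> cylinder_Dk r s k (orbit r s lam))"
proof (intro conjI impI)
  assume "k \<le> r \<and> card {i. i < r \<and> lam i = \<infinity>} = r - k"
  then show "cylinder_Dk r s k (orbit r s lam)" using cyl assms by blast
next
  assume "is_partition r lam"
  then have "{i. i < r \<and> lam i = \<infinity>} = {}" unfolding is_partition_def by auto
  then have "cylinder_Dk r s r (orbit r s lam)" using cyl[where k=r] assms by simp
  then obtain n C where "constructible_in (jets r s n) C" "C \<subseteq> Dk_jets r s r n"
     "orbit r s lam = {A \<in> Dk_arcs r s r. trunc n A \<in> C}" unfolding cylinder_Dk_def by blast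
  then show "cylinder_M r s (orbit r s lam)" unfolding cylinder_M_def Dk_arcs_r by blast
qed


end
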